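(* Let $(\delta_k)_k\subset[0,1]^2$ with $\delta_k\to\delta\in[0,1]^2$. For every $\varphi\in C_c^\infty(\mathbb{R}^3)$ it holds that $\mathcal{Q}_{\rho,\delta_k}\varphi\to\mathcal{Q}_{\rho,\delta}\varphi$ and $D_{\rho,\delta_k}\varphi\to D_{\rho,\delta}\varphi$ uniformly on $\mathbb{R}^3$ as $k\to\infty$.
   Context: For $r=(\bar r,r_3)\in[0,\infty)^2$, $T_r=\mathrm{diag}(\bar r,\bar r,r_3)$. The kernel $\rho:\mathbb{R}^3\setminus\{0\}\to[0,\infty)$ is radial, $\rho(z)=\rho^{\rm rad}(|z|)$, with, for some $\eta_0>0$, $\nu>0$, $0<\sigma\le\gamma<1$: (H0) $\inf_{B_{\eta_0}(0)}\rho>0$, $\operatorname{supp}\rho=\overline{B_1(0)}$, $\int\rho=3$; (H1) $r\mapsto r^{\nu+1}\rho^{\rm rad}(r)$ non-increasing on $(0,\infty)$; (H2) $f_\rho(r):=r\rho^{\rm rad}(r)$ smooth on $(0,\infty)$ with $|f_\rho^{(k)}(r)|\le C_kf_\rho(r)/r^k$ on $(0,\eta_0)$; (H3) $r^{2+\sigma}\rho^{\rm rad}$ almost non-increasing, (H4) $r^{2+\gamma}\rho^{\rm rad}$ almost non-decreasing on $(0,\eta_0)$ (almost monotone: $\exists C>0$, $f(t_1)\ge Cf(t_2)$ resp. $\le$, for $t_1<t_2$). $Q_\rho(z):=\int_{|z|}^\infty\rho^{\rm rad}(t)/t\,dt$; $\mathcal{Q}_{\rho,\delta}\varphi(x):=\int_{\mathbb{R}^3}Q_\rho(z)\varphi(x-T_\delta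 z)dz$ and $D_{\rho,\delta}\varphi:=\nabla\mathcal{Q}_{\rho,\delta}\varphi$. *)

theory Defs
  imports "HOL-Analysis.Analysis"
begin

definition Tmat :: "real \<times> real \<Rightarrow> real^3 \<Rightarrow> real^3" where
  "Tmat r z = (\<chi> i. if i = 3 then snd r * z $ i else fst r * z $ i)"

text \<open>Q_rho as a function of the radius: Q_rho(z) = Qrad rho_rad |z|.\<close>
definition Qrad :: "(real \<Rightarrow> real) \<Rightarrow> real \<Rightarrow> real" where
  "Qrad rhorad s = integral {s..} (\<lambda>t. rhorad t / t)"

definition Qop :: "(real \<Rightarrow> real) \<Rightarrow> real \<times> real \<Rightarrow> (real^3 \<Rightarrow> real) \<Rightarrow> real^3 \<Rightarrow> real" where
  "Qop rhorad d phi x = integral UNIV (\<lambda>z. Qrad rhorad (norm z) * phi (x - Tmat d z))"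

definition grad3 :: "(real^3 \<Rightarrow> real) \<Rightarrow> real^3 \<Rightarrow> real^3" where
  "grad3 f x = (\<chi> i. frechet_derivative f (at x) (axis i 1))"

definition Dop :: "(real \<Rightarrow> real) \<Rightarrow> real \<times> real \<Rightarrow> (real^3 \<Rightarrow> real) \<Rightarrow> real^3 \<Rightarrow> real^3" where
  "Dop rhorad d phi = grad3 (Qop rhorad d phi)"

definition pderiv3 :: "3 \<Rightarrow> (real^3 \<Rightarrow> real) \<Rightarrow> real^3 \<Rightarrow> real" where
  "pderiv3 i f x = frechet_derivative f (at x) (axis i 1)"

fun iter_pderiv3 :: "3 list \<Rightarrow> (real^3 \<Rightarrow> real) \<Rightarrow> real^3 \<Rightarrow> real" where
  "iter_pderiv3 [] f = f"
| "iter_pderiv3 (i # is) f = pderiv3 i (iter_pderiv3 is f)"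

definition smooth3 :: "(real^3 \<Rightarrow> real) \<Rightarrow> bool" where
  "smooth3 f \<longleftrightarrow> (\<forall>is x. iter_pderiv3 is f differentiable (at x))"

definition Cc_inf3 :: "(real^3 \<Rightarrow> real) \<Rightarrow> bool" where
  "Cc_inf3 f \<longleftrightarrow> smooth3 f \<and> compact (closure {x. f x \<noteq> 0})"

end

theory Submission
  imports Defs
begin

lemma rho_zero:
  fixes rhorad :: "real \<Rightarrow> real"
  assumes "closure {z::real^3. z \<noteq> 0 \<and> rhorad (norm z) \<noteq> 0} = cball 0 1" "t > 1"
  shows "rhorad t = 0"
proof (rule ccontr)
  assume "rhorad t \<noteq> 0"
  define v :: "real^3" where "v = t *\<^sub>R axis 1 1"
  have nv: "norm v = t" using assms(2) by (simp add: v_def)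
  then have "v \<noteq> 0" using assms(2) by auto
  then have "v \<in> {z::real^3. z \<noteq> 0 \<and> rhorad (norm z) \<noteq> 0}"
    using nv \<open>rhorad t \<noteq> 0\<close> by auto
  then have "v \<in> closure {z::real^3. z \<noteq> 0 \<and> rhorad (norm z) \<noteq> 0}"
    by (rule closure_subset[THEN subsetD])
  then have "v \<in> cball (0::real^3) 1" by (simp only: assms(1))
  then have "norm v \<le> 1" by (simp only: mem_cball_0)
  then show False using assms(2) nv by linarith
qed

lemma rho_cont:
  fixes rhorad :: "real \<Rightarrow> real"
  assumes "\<forall>k. \<forall>r>0. ((deriv ^^ k) (\<lambda>t. t * rhorad t)) differentiable (at r)"
  shows "continuous_on {0<..} rhorad"
proof -
  have d: "\<forall>r>0. (\<lambda>t. t * rhorad t) differentiable (at r)" using spec[OF assms, of 0] by simp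
  have "continuous_on {0<..} (\<lambda>t. t * rhorad t)"
    by (rule differentiable_imp_continuous_on, rule differentiable_at_imp_differentiable_on) (use d in auto)
  then have "continuous_on {0<..} (\<lambda>t. (t * rhorad t) / t)"
    by (rule continuous_on_divide) (auto intro: continuous_on_id)
  then show ?thesis by (rule continuous_on_eq) auto
qed

lemma Qrad_eq:
  fixes rhorad :: "real \<Rightarrow> real"
  assumes z: "\<forall>t>1. rhorad t = 0" and c: "continuous_on {0<..} rhorad"
    and s: "0 < s" "s \<le> 2"
  shows "(\<lambda>t. rhorad t / t) integrable_on {s..2}"
    and "Qrad rhorad s = integral {s..2} (\<lambda>t. rhorad t / t)"
proof -
  let ?h = "\<lambda>t. rhorad t / t"
  have "continuous_on {s..2} ?h"
    by (rule continuous_on_divide) (use s in \<open>auto intro: continuous_on_id continuous_on_subset[OF c]\<close>)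
  then show int: "?h integrable_on {s..2}" by (rule integrable_continuous_interval)
  let ?g = "\<lambda>t. if t \<in> {s..} then ?h t else 0"
  have "(?h has_integral integral {s..2} ?h) {s..2}" using int by (rule integrable_integral)
  then have "(?g has_integral integral {s..2} ?h) {s..2}"
    by (rule has_integral_eq[rotated]) auto
  then have "(?g has_integral integral {s..2} ?h) UNIV"
    by (rule has_integral_on_superset) (use z in auto)
  then have "(?h has_integral integral {s..2} ?h) {s..}"
    by (rule has_integral_restrict_UNIV[THEN iffD1])
  then show "Qrad rhorad s = integral {s..2} ?h"
    unfolding Qrad_def by (rule integral_unique)
qed

lemma Qrad_zero:
  fixes rhorad :: "real \<Rightarrow> real"
  assumes z: "\<forall>t>1. rhorad t = 0" and s: "s > 1"
  shows "Qrad rhorad s = 0"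
proof -
  have "integral {s..} (\<lambda>t. rhorad t / t) = integral {s..} (\<lambda>t. 0)"
    by (rule integral_cong) (use z s in auto)
  then show ?thesis unfolding Qrad_def by simp
qed

lemma rho_bound:
  fixes rhorad :: "real \<Rightarrow> real" and a :: real
  assumes nonneg: "\<forall>r>0. rhorad r \<ge> 0"
    and H1: "\<forall>s t. 0 < s \<and> s \<le> t \<longrightarrow> t powr (nu + 1) * rhorad t \<le> s powr (nu + 1) * rhorad s"
    and H4: "\<exists>C>0. \<forall>t1 t2. 0 < t1 \<and> t1 < t2 \<and> t2 < eta0 \<longrightarrow>
               t1 powr a * rhorad t1 \<le> C * (t2 powr a * rhorad t2)"
    and eta0: "eta0 > 0" and a: "a > 0" and nu: "nu > 0"
    and z: "\<forall>t>1. rhorad t = 0"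
  shows "\<exists>B\<ge>0. \<forall>t. 0 < t \<and> t \<le> 2 \<longrightarrow> rhorad t / t \<le> B * t powr (- a - 1)"
proof -
  obtain C4 where C4: "C4 > 0" "\<forall>t1 t2. 0 < t1 \<and> t1 < t2 \<and> t2 < eta0 \<longrightarrow>
               t1 powr a * rhorad t1 \<le> C4 * (t2 powr a * rhorad t2)" using H4 by blast
  define t0 where "t0 = min eta0 1 / 2"
  have t0: "0 < t0" "t0 < eta0" "t0 < 1" using eta0 by (auto simp: t0_def)
  have r0: "rhorad t0 \<ge> 0" using nonneg t0 by auto
  define B where "B = max (C4 * t0 powr a) 1 * rhorad t0"
  have B0: "B \<ge> 0" using r0 by (simp add: B_def)
  have main: "rhorad t \<le> B * t powr (- a)" if t: "0 < t" "t \<le> 1" for t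
  proof (cases "t < t0")
    case True
    have "t powr a * rhorad t \<le> C4 * (t0 powr a * rhorad t0)" using C4(2)[rule_format, of t t0] t True t0 by auto
    then have "(t powr a * rhorad t) * t powr (- a) \<le> (C4 * (t0 powr a * rhorad t0)) * t powr (- a)"
      by (rule mult_right_mono) simp
    moreover have "rhorad t = (t powr a * rhorad t) * t powr (- a)"
      using t by (simp add: powr_minus field_simps)
    ultimately have "rhorad t \<le> (C4 * (t0 powr a * rhorad t0)) * t powr (- a)"
      by simp
    also have "\<dots> \<le> B * t powr (- a)"
    proof (rule mult_right_mono)
      show "C4 * (t0 powr a * rhorad t0) \<le> B" unfolding B_def
        by (subst mult.assoc[symmetric]) (rule mult_right_mono[OF max.cobounded1 r0])
    qed simp
    finally show ?thesis .
  next
    case False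
    have "t powr (nu + 1) * rhorad t \<le> t0 powr (nu + 1) * rhorad t0" using H1[rule_format, of t0 t] t0 False by auto
    also have "\<dots> \<le> t powr (nu + 1) * rhorad t0"
      by (rule mult_right_mono[OF _ r0]) (use False t0 nu in \<open>auto intro!: powr_mono2\<close>)
    finally have "rhorad t \<le> rhorad t0" using t by (simp add: mult_le_cancel_left_pos)
    also have "\<dots> \<le> B" using mult_right_mono[OF max.cobounded2[of 1 "C4 * t0 powr a"] r0] by (simp add: B_def)
    also have "\<dots> \<le> B * t powr (- a)"
    proof -
      have "t powr a \<le> 1" using a t by (intro powr_le1) auto
      then have "1 \<le> t powr (- a)" using t by (simp add: powr_minus one_le_inverse)
      then show ?thesis using mult_left_mono[OF _ B0, of 1 "t powr (- a)"] by simp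
    qed
    finally show ?thesis .
  qed
  show ?thesis
  proof (intro exI[of _ B] conjI allI impI)
    fix t :: real assume t: "0 < t \<and> t \<le> 2"
    show "rhorad t / t \<le> B * t powr (- a - 1)"
    proof (cases "t \<le> 1")
      case True
      have "rhorad t / t \<le> B * t powr (- a) / t"
        using main[of t] True t by (simp add: divide_right_mono)
      also have "\<dots> = B * t powr (- a - 1)" using t by (simp add: powr_diff)
      finally show ?thesis .
    next
      case False
      then show ?thesis using z B0 by simp
    qed
  qed (rule B0)
qed

lemma Qrad_props:
  fixes rhorad :: "real \<Rightarrow> real" and a :: real
  assumes z: "\<forall>t>1. rhorad t = 0" and c: "continuous_on {0<..} rhorad"
    and nonneg: "\<forall>r>0. rhorad r \<ge> 0" and a: "a > 0"
    and rb: "\<exists>B\<ge>0. \<forall>t. 0 < t \<and> t \<le> 2 \<longrightarrow> rhorad t / t \<le> B * t powr (- a - 1)"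
  shows "\<And>s. 0 < s \<Longrightarrow> 0 \<le> Qrad rhorad s"
    and "\<And>s s'. 0 < s \<Longrightarrow> s \<le> s' \<Longrightarrow> Qrad rhorad s' \<le> Qrad rhorad s"
    and "\<exists>M\<ge>0. \<forall>s>0. Qrad rhorad s \<le> M * s powr (- a)"
proof -
  let ?h = "\<lambda>t. rhorad t / t"
  show nn: "0 \<le> Qrad rhorad s" if s: "0 < s" for s
  proof (cases "s \<le> 2")
    case True
    show ?thesis using Qrad_eq[OF z c s True] nonneg s by (auto intro!: integral_nonneg)
  next
    case False then show ?thesis using Qrad_zero[OF z, of s] by simp
  qed
  show "Qrad rhorad s' \<le> Qrad rhorad s" if s: "0 < s" "s \<le> s'" for s s'
  proof (cases "s' \<le> 2")
    case True
    have int: "?h integrable_on {s..2}" using Qrad_eq[OF z c s(1)] True s by auto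
    have "integral {s..s'} ?h + integral {s'..2} ?h = integral {s..2} ?h"
      by (rule Henstock_Kurzweil_Integration.integral_combine[OF s(2) True int])
    moreover have "0 \<le> integral {s..s'} ?h"
      by (rule integral_nonneg[OF integrable_subinterval_real[OF int]]) (use s True nonneg in auto)
    ultimately show ?thesis using Qrad_eq[OF z c s(1)] Qrad_eq[OF z c _ True] s True by auto
  next
    case False then show ?thesis using Qrad_zero[OF z, of s'] nn[OF s(1)] by simp
  qed
  obtain B where B: "B \<ge> 0" "\<forall>t. 0 < t \<and> t \<le> 2 \<longrightarrow> ?h t \<le> B * t powr (- a - 1)" using rb by blast
  show "\<exists>M\<ge>0. \<forall>s>0. Qrad rhorad s \<le> M * s powr (- a)"
  proof (intro exI[of _ "B / a"] conjI allI impI)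
    show "0 \<le> B / a" using B a by simp
    fix s :: real assume s: "0 < s"
    show "Qrad rhorad s \<le> B / a * s powr (- a)"
    proof (cases "s \<le> 2")
      case True
      let ?F = "\<lambda>t. - (B / a) * t powr (- a)"
      have "((\<lambda>t. B * t powr (- a - 1)) has_integral (?F 2 - ?F s)) {s..2}"
      proof (rule fundamental_theorem_of_calculus)
        show "s \<le> 2" by fact
        fix x assume x: "x \<in> {s..2}"
        have "((\<lambda>t. t powr (- a)) has_real_derivative (- a) * x powr (- a - 1)) (at x)"
          using has_real_derivative_powr[of x "- a"] x s by auto
        then have "(?F has_real_derivative (- (B / a)) * ((- a) * x powr (- a - 1))) (at x)"
          by (rule DERIV_cmult)
        moreover have "(- (B / a)) * ((- a) * x powr (- a - 1)) = B * x powr (- a - 1)"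
          using a by simp
        ultimately have "(?F has_real_derivative B * x powr (- a - 1)) (at x within {s..2})"
          by (metis has_field_derivative_at_within)
        then show "(?F has_vector_derivative B * x powr (- a - 1)) (at x within {s..2})"
          by (simp add: has_real_derivative_iff_has_vector_derivative)
      qed
      note G = this
      have "Qrad rhorad s = integral {s..2} ?h" using Qrad_eq[OF z c s True] by simp
      also have "\<dots> \<le> integral {s..2} (\<lambda>t. B * t powr (- a - 1))"
        by (rule integral_le) (use Qrad_eq[OF z c s True] G B s in auto)
      also have "\<dots> = ?F 2 - ?F s" using G by (rule integral_unique)
      also have "\<dots> \<le> B / a * s powr (- a)" using B a by simp
      finally show ?thesis .
    next
      case False
      then show ?thesis using Qrad_zero[OF z, of s] B a by simp
    qed
  qed
qed

lemma K_meas: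
  fixes rhorad :: "real \<Rightarrow> real"
  assumes anti: "\<And>s s'. 0 < s \<Longrightarrow> s \<le> s' \<Longrightarrow> Qrad rhorad s' \<le> Qrad rhorad s"
  shows "(\<lambda>z::real^3. Qrad rhorad (norm z)) \<in> borel_measurable lborel"
proof -
  define g where "g s = (if s > 0 then - Qrad rhorad s else 0)" for s
  have "g \<in> borel_measurable borel"
  proof (rule borel_measurable_piecewise_mono[of "{{..0},{0<..}}"])
    show "\<Union> {{..0}, {0<..}} = (UNIV :: real set)" by auto
    fix c :: "real set" assume "c \<in> {{..0},{0<..}}"
    then show "mono_on c g" by (auto simp: mono_on_def g_def anti)
  qed auto
  then have gm: "(\<lambda>z::real^3. g (norm z)) \<in> borel_measurable borel"
    by (intro measurable_compose[OF borel_measurable_norm]) auto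
  have "(\<lambda>z::real^3. - g (norm z)) \<in> borel_measurable lborel"
    using gm by (simp add: measurable_lborel2)
  then show ?thesis
    by (rule measurable_discrete_difference[where X="{0}"]) (auto simp: g_def)
qed

lemma K_integrable:
  fixes rhorad :: "real \<Rightarrow> real" and a :: real
  assumes meas: "(\<lambda>z::real^3. Qrad rhorad (norm z)) \<in> borel_measurable lborel"
    and bound: "\<exists>M\<ge>0. \<forall>s>0. Qrad rhorad s \<le> M * s powr (- a)"
    and nn: "\<And>s. 0 < s \<Longrightarrow> 0 \<le> Qrad rhorad s"
    and zero: "\<And>s. s > 1 \<Longrightarrow> Qrad rhorad s = 0"
    and a: "0 < a" "a < 3"
  shows "integrable lborel (\<lambda>z::real^3. Qrad rhorad (norm z))"
proof -
  obtain M where M: "M \<ge> 0" "\<forall>s>0. Qrad rhorad s \<le> M * s powr (- a)" using bound by blast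
  define r where "r n = 2 * (1/2::real)^n" for n :: nat
  define q where "q = (1/2::real) powr (- a)"
  define c where "c n = M * q ^ Suc n" for n :: nat
  define f where "f n z = c n * indicator (ball (0::real^3) (r n)) z" for n z
  define V where "V = measure lborel (ball (0::real^3) 1)"
  have q: "q = 2 powr a" unfolding q_def by (simp add: powr_minus_divide powr_divide)
  have q8: "q < 8"
  proof -
    have "(2::real) powr a < 2 powr 3" using a by (intro powr_less_mono) auto
    then show ?thesis using q by simp
  qed
  have q0: "q > 0" using q by simp
  have cpow: "((1/2::real)^k) powr (- a) = q ^ k" for k :: nat
  proof -
    have "((1/2::real)^k) powr (- a) = ((1/2::real) powr real k) powr (- a)"
      by (simp add: powr_realpow)
    also have "\<dots> = ((1/2::real) powr (- a)) powr real k" by (simp add: powr_powr mult.commute)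
    also have "\<dots> = q ^ k" unfolding q_def by (simp add: powr_realpow)
    finally show ?thesis .
  qed
  have c0: "c n \<ge> 0" for n using M q0 by (simp add: c_def)
  have fint: "integrable lborel (f n)" for n
    unfolding f_def
    by (intro integrable_mult_right integrable_real_indicator emeasure_lborel_ball_finite) auto
  have fnorm: "(LINT z|lborel. norm (f n z)) = c n * r n ^ 3 * V" for n
  proof -
    have "(LINT z|lborel. norm (f n z)) = (LINT z|lborel. c n * indicator (ball (0::real^3) (r n)) z)"
      using c0 by (intro Bochner_Integration.integral_cong) (auto simp: f_def indicator_def)
    also have "\<dots> = c n * measure lborel (ball (0::real^3) (r n))" by simp
    also have "\<dots> = c n * r n ^ 3 * V"
      using content_ball_conv_unit_ball[of "r n" "0::real^3"] by (simp add: r_def V_def)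
    finally show ?thesis .
  qed
  have S: "summable (\<lambda>n. (8 * M * q * V) * (q / 8) ^ n)"
    using q8 q0 by (intro summable_mult summable_geometric) auto
  have E: "c n * r n ^ 3 * V = (8 * M * q * V) * (q / 8) ^ n" for n
  proof -
    have "((2::real)^n)^3 = 2^(n*3)" by (rule power_mult[symmetric])
    also have "\<dots> = (2^3)^n" by (simp only: mult.commute[of n 3] power_mult)
    also have "\<dots> = (8::real)^n" by simp
    finally have e8: "((2::real)^n)^3 = 8^n" .
    show ?thesis using e8 by (simp add: c_def r_def power_mult_distrib power_divide field_simps)
  qed
  have sumint: "summable (\<lambda>n. LINT z|lborel. norm (f n z))"
    unfolding fnorm E by (rule S)
  have fsum: "summable (\<lambda>n. f n z)" "summable (\<lambda>n. norm (f n z))" if z: "z \<noteq> 0" for z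
  proof -
    obtain N where N: "(1/2::real)^N < norm z / 2" using real_arch_pow_inv[of "norm z / 2" "1/2"] z by auto
    have "f n z = 0" if "n \<notin> {..<N}" for n
    proof -
      have "(1/2::real)^n \<le> (1/2)^N" using that by (intro power_decreasing) auto
      then have "r n \<le> norm z" using N unfolding r_def by linarith
      then show ?thesis by (simp add: f_def)
    qed
    note fz = this
    show "summable (\<lambda>n. f n z)" by (rule summable_finite[of "{..<N}"]) (use fz in auto)
    show "summable (\<lambda>n. norm (f n z))" by (rule summable_finite[of "{..<N}"]) (use fz in auto)
  qed
  have Gint: "integrable lborel (\<lambda>z. \<Sum>n. f n z)"
    by (rule integrable_suminf[OF fint _ sumint])
       (rule AE_mp[OF AE_lborel_singleton[of 0]], rule AE_I2, use fsum(2) in blast)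
  show ?thesis
  proof (rule Bochner_Integration.integrable_bound[OF Gint meas])
    show "AE z in lborel. norm (Qrad rhorad (norm z)) \<le> norm (\<Sum>n. f n z)"
    proof (rule AE_mp[OF AE_lborel_singleton[of 0]], intro AE_I2 impI)
      fix z :: "real^3" assume z: "z \<noteq> 0"
      have fnn: "0 \<le> f n z" for n using c0 by (simp add: f_def)
      have G0: "0 \<le> (\<Sum>n. f n z)" using fsum[OF z] fnn by (intro suminf_nonneg) auto
      have K0: "0 \<le> Qrad rhorad (norm z)" using nn z by simp
      have "Qrad rhorad (norm z) \<le> (\<Sum>n. f n z)"
      proof (cases "norm z > 1")
        case True then show ?thesis using zero G0 by simp
      next
        case False
        have ex: "\<exists>m. (1/2::real)^m < norm z" using real_arch_pow_inv[of "norm z" "1/2"] z by auto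
        define m where "m = (LEAST m. (1/2::real)^m < norm z)"
        have m1: "(1/2::real)^m < norm z" unfolding m_def by (rule LeastI_ex[OF ex])
        have "m \<noteq> 0"
        proof
          assume "m = 0" then show False using m1 False by simp
        qed
        then obtain n where mn: "m = Suc n" by (cases m) auto
        have "\<not> (1/2::real)^n < norm z" using not_less_Least[of n "\<lambda>m. (1/2::real)^m < norm z"] mn
          unfolding m_def by auto
        moreover have "(0::real) < (1/2)^n" by simp
        ultimately have zr: "norm z < r n" unfolding r_def by linarith
        have "Qrad rhorad (norm z) \<le> M * norm z powr (- a)" using M z by simp
        also have "\<dots> \<le> M * ((1/2::real)^Suc n) powr (- a)"
          using m1 mn a M by (intro mult_left_mono powr_mono2') auto
        also have "\<dots> = M * q ^ Suc n" by (simp only: cpow)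
        also have "\<dots> = f n z" using zr by (simp add: f_def c_def)
        also have "\<dots> \<le> (\<Sum>n. f n z)"
          using sum_le_suminf[OF fsum(1)[OF z], of "{n}"] fnn by simp
        finally show ?thesis .
      qed
      then show "norm (Qrad rhorad (norm z)) \<le> norm (\<Sum>n. f n z)" using K0 G0 by simp
    qed
  qed
qed

lemma Tmat_diff: "Tmat r z - Tmat r' z = Tmat (r - r') z"
  by (simp add: Tmat_def vec_eq_iff algebra_simps)

lemma Tmat_norm: "norm (Tmat r z) \<le> 3 * (norm r * norm z)"
proof -
  have c: "\<bar>Tmat r z $ i\<bar> \<le> norm r * norm z" for i
  proof -
    have f: "\<bar>fst r\<bar> \<le> norm r" using norm_fst_le[of "fst r" "snd r"] by simp
    have s: "\<bar>snd r\<bar> \<le> norm r" using norm_snd_le[of "snd r" "fst r"] by simp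
    have zi: "\<bar>z $ i\<bar> \<le> norm z" by (rule component_le_norm_cart)
    show ?thesis
      using mult_mono[OF f zi] mult_mono[OF s zi] by (cases "i = 3") (simp_all add: Tmat_def abs_mult)
  qed
  have "norm (Tmat r z) \<le> (\<Sum>i\<in>UNIV. \<bar>Tmat r z $ i\<bar>)" by (rule norm_le_l1_cart)
  also have "\<dots> \<le> (\<Sum>i\<in>(UNIV::3 set). norm r * norm z)" by (rule sum_mono) (rule c)
  also have "\<dots> = 3 * (norm r * norm z)" by simp
  finally show ?thesis .
qed

lemma Tmat_linear: "bounded_linear (Tmat r)"
proof -
  have "linear (Tmat r)"
    by (rule linearI) (simp_all add: Tmat_def vec_eq_iff algebra_simps)
  then show ?thesis by (simp add: linear_conv_bounded_linear)
qed

lemma psi_bounded: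
  fixes psi :: "real^3 \<Rightarrow> real"
  assumes c: "continuous_on UNIV psi" and s: "\<forall>y. R < norm y \<longrightarrow> psi y = 0"
  shows "\<exists>B\<ge>0. \<forall>y. \<bar>psi y\<bar> \<le> B"
proof -
  have "compact (psi ` cball 0 R)"
    by (rule compact_continuous_image) (auto intro: continuous_on_subset[OF c])
  then obtain B where B: "\<forall>v\<in>psi ` cball 0 R. norm v \<le> B" using compact_imp_bounded bounded_iff by metis
  show ?thesis
  proof (intro exI[of _ "max B 0"] conjI allI)
    fix y
    show "\<bar>psi y\<bar> \<le> max B 0"
    proof (cases "norm y \<le> R")
      case True
      then have "psi y \<in> psi ` cball 0 R" by simp
      then have "norm (psi y) \<le> B" using B by blast
      then show ?thesis by simp
    next
      case False then show ?thesis using s by simp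
    qed
  qed simp
qed

lemma psi_unif:
  fixes psi :: "real^3 \<Rightarrow> real"
  assumes c: "continuous_on UNIV psi" and s: "\<forall>y. R < norm y \<longrightarrow> psi y = 0"
    and e: "e > 0"
  shows "\<exists>\<delta>>0. \<forall>y u. norm u < \<delta> \<longrightarrow> \<bar>psi (y + u) - psi y\<bar> < e"
proof -
  have "uniformly_continuous_on (cball 0 (R + 1)) psi"
    by (rule compact_uniformly_continuous) (auto intro: continuous_on_subset[OF c])
  then obtain d where d: "d > 0" "\<forall>x\<in>cball 0 (R+1). \<forall>x'\<in>cball 0 (R+1). dist x' x < d \<longrightarrow> dist (psi x') (psi x) < e"
    using e unfolding uniformly_continuous_on_def by metis
  show ?thesis
  proof (intro exI[of _ "min d 1"] conjI allI impI)
    show "min d 1 > 0" using d by simp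
    fix y u :: "real^3" assume u: "norm u < min d 1"
    show "\<bar>psi (y + u) - psi y\<bar> < e"
    proof (cases "norm y \<le> R + 1 \<and> norm (y + u) \<le> R + 1")
      case True
      then have m: "y \<in> cball 0 (R+1)" "y + u \<in> cball 0 (R+1)" by auto
      have "dist (y + u) y < d" using u by (simp add: dist_norm)
      then have "dist (psi (y + u)) (psi y) < e" using d(2) m by blast
      then show ?thesis by (simp add: dist_real_def)
    next
      case False
      have "norm (y + u) \<le> norm y + norm u" by (rule norm_triangle_ineq)
      moreover have "norm y \<le> norm (y + u) + norm u" using norm_triangle_ineq4[of "y + u" u] by simp
      ultimately have "R < norm y \<and> R < norm (y + u)" using False u by auto
      then show ?thesis using s e by simp
    qed
  qed
qed

lemma Q_int:
  fixes rhorad :: "real \<Rightarrow> real" and psi :: "real^3 \<Rightarrow> real"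
  assumes Kint: "integrable lborel (\<lambda>z::real^3. Qrad rhorad (norm z))"
    and c: "continuous_on UNIV psi" and B: "\<forall>y. \<bar>psi y\<bar> \<le> B"
  shows "integrable lborel (\<lambda>z. Qrad rhorad (norm z) * psi (x - Tmat d z))"
    and "Qop rhorad d psi x = (LINT z|lborel. Qrad rhorad (norm z) * psi (x - Tmat d z))"
proof -
  have cm: "continuous_on UNIV (\<lambda>z. psi (x - Tmat d z))"
    by (rule continuous_on_compose2[OF c continuous_on_diff[OF continuous_on_const linear_continuous_on[OF Tmat_linear]]]) auto
  have m: "(\<lambda>z. psi (x - Tmat d z)) \<in> borel_measurable lborel"
    using borel_measurable_continuous_onI[OF cm] by (simp add: measurable_lborel2)
  have "integrable lborel (\<lambda>z::real^3. B * Qrad rhorad (norm z))"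
    using Kint by (intro Bochner_Integration.integrable_mult_right)
  then show int: "integrable lborel (\<lambda>z. Qrad rhorad (norm z) * psi (x - Tmat d z))"
  proof (rule Bochner_Integration.integrable_bound)
    show "(\<lambda>z. Qrad rhorad (norm z) * psi (x - Tmat d z)) \<in> borel_measurable lborel"
      using Kint m by (intro borel_measurable_times) auto
    show "AE z in lborel. norm (Qrad rhorad (norm z) * psi (x - Tmat d z)) \<le> norm (B * Qrad rhorad (norm z))"
    proof (rule AE_I2)
      fix z
      have "\<bar>psi (x - Tmat d z)\<bar> \<le> \<bar>B\<bar>" using B[rule_format, of "x - Tmat d z"] by simp
      then show "norm (Qrad rhorad (norm z) * psi (x - Tmat d z)) \<le> norm (B * Qrad rhorad (norm z))"
        using mult_left_mono[of "\<bar>psi (x - Tmat d z)\<bar>" "\<bar>B\<bar>" "\<bar>Qrad rhorad (norm z)\<bar>"]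
        by (simp add: abs_mult mult.commute)
    qed
  qed
  show "Qop rhorad d psi x = (LINT z|lborel. Qrad rhorad (norm z) * psi (x - Tmat d z))"
    unfolding Qop_def by (rule integral_lborel[OF int])
qed

lemma Q_unif:
  fixes rhorad :: "real \<Rightarrow> real" and psi :: "real^3 \<Rightarrow> real"
    and ds :: "nat \<Rightarrow> real \<times> real" and d :: "real \<times> real"
  assumes Kint: "integrable lborel (\<lambda>z::real^3. Qrad rhorad (norm z))"
    and Kzero: "\<forall>z::real^3. 1 < norm z \<longrightarrow> Qrad rhorad (norm z) = 0"
    and c: "continuous_on UNIV psi" and s: "\<forall>y. R < norm y \<longrightarrow> psi y = 0"
    and lim: "ds \<longlonglongrightarrow> d"
  shows "uniform_limit UNIV (\<lambda>k. Qop rhorad (ds k) psi) (Qop rhorad d psi) sequentially"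
proof -
  obtain B where B: "B \<ge> 0" "\<forall>y. \<bar>psi y\<bar> \<le> B" using psi_bounded[OF c s] by blast
  let ?K = "\<lambda>z::real^3. Qrad rhorad (norm z)"
  define I where "I = (LINT z|lborel. \<bar>?K z\<bar>)"
  have I0: "I \<ge> 0" unfolding I_def by (rule Bochner_Integration.integral_nonneg) simp
  show ?thesis unfolding uniform_limit_iff
  proof (intro allI impI)
    fix e :: real assume e: "e > 0"
    define e' where "e' = e / (2 * (I + 1))"
    have e': "e' > 0" using e I0 by (simp add: e'_def)
    obtain \<delta> where \<delta>: "\<delta> > 0" "\<forall>y u. norm u < \<delta> \<longrightarrow> \<bar>psi (y + u) - psi y\<bar> < e'"
      using psi_unif[OF c s e'] by blast
    have "\<delta> / 3 > 0" using \<delta> by simp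
    then have "eventually (\<lambda>k. dist (ds k) d < \<delta> / 3) sequentially"
      using lim unfolding tendsto_iff by blast
    then show "eventually (\<lambda>k. \<forall>x\<in>UNIV. dist (Qop rhorad (ds k) psi x) (Qop rhorad d psi x) < e) sequentially"
    proof (rule eventually_mono)
      fix k assume k: "dist (ds k) d < \<delta> / 3"
      show "\<forall>x\<in>UNIV. dist (Qop rhorad (ds k) psi x) (Qop rhorad d psi x) < e"
      proof
        fix x :: "real^3"
        let ?f = "\<lambda>z. ?K z * psi (x - Tmat (ds k) z)"
        let ?g = "\<lambda>z. ?K z * psi (x - Tmat d z)"
        have fi: "integrable lborel ?f" and fe: "Qop rhorad (ds k) psi x = integral\<^sup>L lborel ?f"
          using Q_int[OF Kint c B(2)] by auto
        have gi: "integrable lborel ?g" and ge: "Qop rhorad d psi x = integral\<^sup>L lborel ?g"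
          using Q_int[OF Kint c B(2)] by auto
        have pt: "\<bar>?f z - ?g z\<bar> \<le> e' * \<bar>?K z\<bar>" for z
        proof (cases "norm z \<le> 1")
          case True
          have "norm (Tmat d z - Tmat (ds k) z) \<le> 3 * (norm (d - ds k) * norm z)"
            using Tmat_norm[of "d - ds k" z] Tmat_diff[of d z "ds k"] by simp
          also have "\<dots> \<le> 3 * (norm (d - ds k) * 1)"
            using True by (intro mult_left_mono) auto
          also have "\<dots> < \<delta>" using k by (simp add: dist_norm norm_minus_commute)
          finally have u: "norm (Tmat d z - Tmat (ds k) z) < \<delta>" .
          have "\<bar>psi ((x - Tmat d z) + (Tmat d z - Tmat (ds k) z)) - psi (x - Tmat d z)\<bar> < e'"
            using \<delta>(2) u by blast
          moreover have "(x - Tmat d z) + (Tmat d z - Tmat (ds k) z) = x - Tmat (ds k) z" by simp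
          ultimately have lt: "\<bar>psi (x - Tmat (ds k) z) - psi (x - Tmat d z)\<bar> < e'" by simp
          have "?f z - ?g z = ?K z * (psi (x - Tmat (ds k) z) - psi (x - Tmat d z))"
            by (simp add: algebra_simps)
          then have "\<bar>?f z - ?g z\<bar> = \<bar>?K z\<bar> * \<bar>psi (x - Tmat (ds k) z) - psi (x - Tmat d z)\<bar>"
            by (simp add: abs_mult)
          also have "\<dots> \<le> \<bar>?K z\<bar> * e'" using lt by (intro mult_left_mono) auto
          finally show ?thesis by (simp add: mult.commute)
        next
          case False then show ?thesis using Kzero by simp
        qed
        have "\<bar>Qop rhorad (ds k) psi x - Qop rhorad d psi x\<bar> = \<bar>LINT z|lborel. ?f z - ?g z\<bar>"
          using fe ge Bochner_Integration.integral_diff[OF fi gi] by simp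
        also have "\<dots> \<le> (LINT z|lborel. \<bar>?f z - ?g z\<bar>)" by (rule integral_abs_bound)
        also have "\<dots> \<le> (LINT z|lborel. e' * \<bar>?K z\<bar>)"
          by (rule integral_mono) (use fi gi Kint pt in auto)
        also have "\<dots> = e' * I" by (simp add: I_def)
        also have "\<dots> < e"
        proof -
          have "e' * I = e * (I / (2 * (I + 1)))" by (simp add: e'_def)
          also have "\<dots> < e * 1" using e I0 by (intro mult_strict_left_mono) auto
          finally show ?thesis by simp
        qed
        finally show "dist (Qop rhorad (ds k) psi x) (Qop rhorad d psi x) < e" by (simp add: dist_real_def)
      qed
    qed
  qed
qed

lemma lin_sum_bl: "bounded_linear (\<lambda>h::real^3. \<Sum>i\<in>UNIV. h $ i * c i)"
proof -
  have "linear (\<lambda>h::real^3. \<Sum>i\<in>UNIV. h $ i * c i)"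
    by (rule linearI) (simp_all add: sum.distrib sum_distrib_left algebra_simps)
  then show ?thesis by (simp add: linear_conv_bounded_linear)
qed

lemma unif_taylor:
  fixes phi :: "real^3 \<Rightarrow> real" and P :: "3 \<Rightarrow> real^3 \<Rightarrow> real"
  assumes D: "\<forall>w. (phi has_derivative (\<lambda>h. \<Sum>i\<in>UNIV. h $ i * P i w)) (at w)"
    and U: "\<forall>i. \<forall>e>0. \<exists>\<delta>>0. \<forall>y u. norm u < \<delta> \<longrightarrow> \<bar>P i (y + u) - P i y\<bar> < e"
    and e: "e > 0"
  shows "\<exists>\<delta>>0. \<forall>y h. norm h < \<delta> \<longrightarrow>
           \<bar>phi (y + h) - phi y - (\<Sum>i\<in>UNIV. h $ i * P i y)\<bar> \<le> e * norm h"
proof -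
  have e3: "e / 3 > 0" using e by simp
  have "\<forall>i. \<exists>\<delta>. \<delta> > 0 \<and> (\<forall>y u. norm u < \<delta> \<longrightarrow> \<bar>P i (y + u) - P i y\<bar> < e / 3)"
    using U e3 by blast
  then obtain df where df: "\<forall>i. df i > 0 \<and> (\<forall>y u. norm u < df i \<longrightarrow> \<bar>P i (y + u) - P i y\<bar> < e / 3)"
    by metis
  define \<delta> where "\<delta> = Min (range df)"
  have \<delta>0: "\<delta> > 0" unfolding \<delta>_def using df by (subst Min_gr_iff) auto
  have \<delta>le: "\<delta> \<le> df i" for i unfolding \<delta>_def by (rule Min_le) auto
  show ?thesis
  proof (intro exI[of _ \<delta>] conjI allI impI)
    show "\<delta> > 0" by (rule \<delta>0)
    fix y h :: "real^3" assume h: "norm h < \<delta>"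
    define g where "g w = phi w - (\<Sum>i\<in>UNIV. w $ i * P i y)" for w
    define g' where "g' w = (\<lambda>k::real^3. (\<Sum>i\<in>UNIV. k $ i * P i w) - (\<Sum>i\<in>UNIV. k $ i * P i y))" for w
    have gd: "(g has_derivative g' w) (at w within ball y \<delta>)" for w
    proof -
      have "((\<lambda>w. \<Sum>i\<in>UNIV. w $ i * P i y) has_derivative (\<lambda>k. \<Sum>i\<in>UNIV. k $ i * P i y)) (at w)"
        by (rule bounded_linear_imp_has_derivative[OF lin_sum_bl])
      from has_derivative_diff[OF D[rule_format, of w] this]
      show ?thesis unfolding g_def g'_def by (rule has_derivative_at_withinI)
    qed
    have gb: "onorm (g' w) \<le> e" if w: "w \<in> ball y \<delta>" for w
    proof (rule onorm_le)
      fix k :: "real^3"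
      have wy: "\<bar>P i w - P i y\<bar> < e / 3" for i
      proof -
        have "norm (w - y) < df i" using w \<delta>le[of i] by (simp add: dist_norm norm_minus_commute)
        then have "\<bar>P i (y + (w - y)) - P i y\<bar> < e / 3" using df by blast
        then show ?thesis by simp
      qed
      have "g' w k = (\<Sum>i\<in>UNIV. k $ i * (P i w - P i y))"
        by (simp add: g'_def sum_subtractf[symmetric] algebra_simps)
      then have "norm (g' w k) \<le> (\<Sum>i\<in>UNIV. \<bar>k $ i * (P i w - P i y)\<bar>)"
        by (simp add: sum_abs)
      also have "\<dots> \<le> (\<Sum>i\<in>(UNIV::3 set). norm k * (e / 3))"
      proof (rule sum_mono)
        fix i :: 3
        have "\<bar>k $ i\<bar> * \<bar>P i w - P i y\<bar> \<le> norm k * (e / 3)"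
          using wy[of i] component_le_norm_cart[of k i] by (intro mult_mono) auto
        then show "\<bar>k $ i * (P i w - P i y)\<bar> \<le> norm k * (e / 3)" by (simp add: abs_mult)
      qed
      also have "\<dots> = e * norm k" by simp
      finally show "norm (g' w k) \<le> e * norm k" .
    qed
    have "norm (g (y + h) - g y) \<le> e * norm (y + h - y)"
      by (rule differentiable_bound[OF convex_ball gd gb]) (use h \<delta>0 in \<open>auto simp: dist_norm\<close>)
    moreover have "g (y + h) - g y = phi (y + h) - phi y - (\<Sum>i\<in>UNIV. h $ i * P i y)"
      by (simp add: g_def sum_subtractf[symmetric] sum.distrib algebra_simps)
    ultimately show "\<bar>phi (y + h) - phi y - (\<Sum>i\<in>UNIV. h $ i * P i y)\<bar> \<le> e * norm h" by simp
  qed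
qed

lemma Qop_deriv:
  fixes rhorad :: "real \<Rightarrow> real" and phi :: "real^3 \<Rightarrow> real" and P :: "3 \<Rightarrow> real^3 \<Rightarrow> real"
  assumes Kint: "integrable lborel (\<lambda>z::real^3. Qrad rhorad (norm z))"
    and pc: "continuous_on UNIV phi" and ps: "\<forall>y. R < norm y \<longrightarrow> phi y = 0"
    and Pc: "\<forall>i. continuous_on UNIV (P i)" and Ps: "\<forall>i y. R < norm y \<longrightarrow> P i y = 0"
    and D: "\<forall>w. (phi has_derivative (\<lambda>h. \<Sum>i\<in>UNIV. h $ i * P i w)) (at w)"
  shows "(Qop rhorad d phi has_derivative (\<lambda>h. \<Sum>i\<in>UNIV. h $ i * Qop rhorad d (P i) x)) (at x)"
proof -
  let ?K = "\<lambda>z::real^3. Qrad rhorad (norm z)"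
  let ?F = "Qop rhorad d phi"
  let ?L = "\<lambda>h. \<Sum>i\<in>UNIV. h $ i * Qop rhorad d (P i) x"
  obtain Bp where Bp: "\<forall>y. \<bar>phi y\<bar> \<le> Bp" using psi_bounded[OF pc ps] by blast
  have "\<forall>i. \<exists>B. \<forall>y. \<bar>P i y\<bar> \<le> B"
  proof
    fix i show "\<exists>B. \<forall>y. \<bar>P i y\<bar> \<le> B" using psi_bounded[of "P i" R] Pc Ps by blast
  qed
  then obtain BP where BP: "\<forall>i y. \<bar>P i y\<bar> \<le> BP i" by metis
  have U: "\<forall>i. \<forall>e>0. \<exists>\<delta>>0. \<forall>y u. norm u < \<delta> \<longrightarrow> \<bar>P i (y + u) - P i y\<bar> < e"
  proof (intro allI impI)
    fix i and e :: real assume "e > 0"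
    then show "\<exists>\<delta>>0. \<forall>y u. norm u < \<delta> \<longrightarrow> \<bar>P i (y + u) - P i y\<bar> < e"
      using psi_unif[of "P i" R e] Pc Ps by blast
  qed
  define I where "I = (LINT z|lborel. \<bar>?K z\<bar>)"
  have I0: "I \<ge> 0" unfolding I_def by (rule Bochner_Integration.integral_nonneg) simp
  show ?thesis unfolding has_derivative_at_alt
  proof (intro conjI allI impI)
    show "bounded_linear ?L" by (rule lin_sum_bl)
    fix e :: real assume e: "e > 0"
    define e' where "e' = e / (I + 1)"
    have e': "e' > 0" using e I0 by (simp add: e'_def)
    obtain \<delta> where \<delta>: "\<delta> > 0" "\<forall>y h. norm h < \<delta> \<longrightarrow>
           \<bar>phi (y + h) - phi y - (\<Sum>i\<in>UNIV. h $ i * P i y)\<bar> \<le> e' * norm h"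
      using unif_taylor[OF D U e'] by blast
    show "\<exists>d>0. \<forall>y. norm (y - x) < d \<longrightarrow> norm (?F y - ?F x - ?L (y - x)) \<le> e * norm (y - x)"
    proof (intro exI[of _ \<delta>] conjI allI impI)
      show "\<delta> > 0" by fact
      fix y assume y: "norm (y - x) < \<delta>"
      define h where "h = y - x"
      let ?fy = "\<lambda>z. ?K z * phi (y - Tmat d z)"
      let ?fx = "\<lambda>z. ?K z * phi (x - Tmat d z)"
      let ?g = "\<lambda>i z. ?K z * P i (x - Tmat d z)"
      have iy: "integrable lborel ?fy" and ey: "?F y = integral\<^sup>L lborel ?fy"
        using Q_int[OF Kint pc Bp] by auto
      have ix: "integrable lborel ?fx" and ex: "?F x = integral\<^sup>L lborel ?fx"
        using Q_int[OF Kint pc Bp] by auto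
      have ig: "integrable lborel (?g i)" and eg: "Qop rhorad d (P i) x = integral\<^sup>L lborel (?g i)" for i
        using Q_int[OF Kint Pc[rule_format, of i] spec[OF BP, of i]] by auto
      have isum: "integrable lborel (\<lambda>z. \<Sum>i\<in>UNIV. h $ i * ?g i z)"
        using ig by (intro Bochner_Integration.integrable_sum Bochner_Integration.integrable_mult_right) auto
      have Lh: "?L h = integral\<^sup>L lborel (\<lambda>z. \<Sum>i\<in>UNIV. h $ i * ?g i z)"
        using ig by (subst Bochner_Integration.integral_sum) (auto simp: eg)
      define G where "G z = ?fy z - ?fx z - (\<Sum>i\<in>UNIV. h $ i * ?g i z)" for z
      have iG: "integrable lborel G" unfolding G_def using iy ix isum by auto
      have eG: "?F y - ?F x - ?L h = integral\<^sup>L lborel G"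
        unfolding G_def ey ex Lh
        using iy ix isum by (simp add: Bochner_Integration.integral_diff)
      have pt: "\<bar>G z\<bar> \<le> e' * norm h * \<bar>?K z\<bar>" for z
      proof -
        have yx: "y - Tmat d z = (x - Tmat d z) + h" by (simp add: h_def)
        have "G z = ?K z * (phi ((x - Tmat d z) + h) - phi (x - Tmat d z) - (\<Sum>i\<in>UNIV. h $ i * P i (x - Tmat d z)))"
          unfolding G_def yx by (simp add: algebra_simps sum_distrib_left)
        then have "\<bar>G z\<bar> = \<bar>?K z\<bar> * \<bar>phi ((x - Tmat d z) + h) - phi (x - Tmat d z) - (\<Sum>i\<in>UNIV. h $ i * P i (x - Tmat d z))\<bar>"
          by (simp add: abs_mult)
        also have "\<dots> \<le> \<bar>?K z\<bar> * (e' * norm h)"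
          using \<delta>(2)[rule_format, of h "x - Tmat d z"] y by (intro mult_left_mono) (auto simp: h_def)
        finally show ?thesis by (simp add: mult.commute)
      qed
      have "norm (?F y - ?F x - ?L (y - x)) = \<bar>integral\<^sup>L lborel G\<bar>" using eG by (simp add: h_def)
      also have "\<dots> \<le> (LINT z|lborel. \<bar>G z\<bar>)" by (rule integral_abs_bound)
      also have "\<dots> \<le> (LINT z|lborel. e' * norm h * \<bar>?K z\<bar>)"
        by (rule integral_mono) (use iG Kint pt in auto)
      also have "\<dots> = e' * norm h * I" by (simp add: I_def)
      also have "\<dots> \<le> e * norm h"
      proof -
        have "e' * I \<le> e"
        proof -
          have "e' * I = e * (I / (I + 1))" by (simp add: e'_def)
          also have "\<dots> \<le> e * 1" using e I0 by (intro mult_left_mono) auto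
          finally show ?thesis by simp
        qed
        then have "(e' * I) * norm h \<le> e * norm h" by (rule mult_right_mono) simp
        then show ?thesis by (simp add: algebra_simps)
      qed
      finally show "norm (?F y - ?F x - ?L (y - x)) \<le> e * norm (y - x)" by (simp add: h_def)
    qed
  qed
qed

lemma phi_facts:
  fixes phi :: "real^3 \<Rightarrow> real"
  assumes phi: "Cc_inf3 phi"
  shows "\<exists>R. (\<forall>y. R < norm y \<longrightarrow> phi y = 0) \<and> (\<forall>i y. R < norm y \<longrightarrow> pderiv3 i phi y = 0)"
    and "continuous_on UNIV phi"
    and "\<forall>i. continuous_on UNIV (pderiv3 i phi)"
    and "\<forall>w. (phi has_derivative (\<lambda>h. \<Sum>i\<in>UNIV. h $ i * pderiv3 i phi w)) (at w)"
proof -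
  have sm: "\<And>is x. iter_pderiv3 is phi differentiable (at x)" using phi by (simp add: Cc_inf3_def smooth3_def)
  let ?S = "closure {x. phi x \<noteq> 0}"
  have "compact ?S" using phi by (simp add: Cc_inf3_def)
  then obtain R where R: "\<forall>x\<in>?S. norm x \<le> R" using compact_imp_bounded bounded_iff by metis
  have z: "phi y = 0" if "R < norm y" for y
  proof (rule ccontr)
    assume "phi y \<noteq> 0"
    then have "y \<in> ?S" by (intro closure_subset[THEN subsetD]) simp
    then have "norm y \<le> R" using R by blast
    then show False using that by linarith
  qed
  have dz: "pderiv3 i phi y = 0" if y: "R < norm y" for i y
  proof -
    have "((\<lambda>_. 0) has_derivative (\<lambda>_. 0)) (at y)" by simp
    then have "(phi has_derivative (\<lambda>_. 0)) (at y)"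
    proof (rule has_derivative_transform_within_open[where s = "- cball 0 R"])
      show "open (- cball (0::real^3) R)" by auto
      show "y \<in> - cball 0 R" using y by auto
      fix w :: "real^3" assume "w \<in> - cball 0 R"
      then show "0 = phi w" using z by auto
    qed
    then have "frechet_derivative phi (at y) = (\<lambda>_. 0)" by (simp add: frechet_derivative_at[symmetric])
    then show ?thesis by (simp add: pderiv3_def)
  qed
  show "\<exists>R. (\<forall>y. R < norm y \<longrightarrow> phi y = 0) \<and> (\<forall>i y. R < norm y \<longrightarrow> pderiv3 i phi y = 0)"
    using z dz by blast
  show "continuous_on UNIV phi"
  proof (rule continuous_at_imp_continuous_on, rule ballI)
    fix x :: "real^3"
    show "isCont phi x" using sm[of "[]" x] by (simp add: differentiable_imp_continuous_within)
  qed
  show "\<forall>i. continuous_on UNIV (pderiv3 i phi)"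
  proof (rule allI, rule continuous_at_imp_continuous_on, rule ballI)
    fix i and x :: "real^3"
    show "isCont (pderiv3 i phi) x" using sm[of "[i]" x] by (simp add: differentiable_imp_continuous_within)
  qed
  show "\<forall>w. (phi has_derivative (\<lambda>h. \<Sum>i\<in>UNIV. h $ i * pderiv3 i phi w)) (at w)"
  proof
    fix w
    have d: "(phi has_derivative frechet_derivative phi (at w)) (at w)"
      using sm[of "[]" w] frechet_derivative_works by auto
    have l: "linear (frechet_derivative phi (at w))" using has_derivative_linear[OF d] .
    have "frechet_derivative phi (at w) = (\<lambda>h. \<Sum>i\<in>UNIV. h $ i * pderiv3 i phi w)"
    proof
      fix h :: "real^3"
      have "frechet_derivative phi (at w) h = frechet_derivative phi (at w) (\<Sum>i\<in>UNIV. h $ i *\<^sub>R axis i 1)"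
        using basis_expansion[of h] by (simp add: scalar_mult_eq_scaleR)
      also have "\<dots> = (\<Sum>i\<in>UNIV. h $ i * frechet_derivative phi (at w) (axis i 1))"
        by (simp add: linear_sum[OF l] linear_scale[OF l])
      finally show "frechet_derivative phi (at w) h = (\<Sum>i\<in>UNIV. h $ i * pderiv3 i phi w)"
        by (simp add: pderiv3_def)
    qed
    then show "(phi has_derivative (\<lambda>h. \<Sum>i\<in>UNIV. h $ i * pderiv3 i phi w)) (at w)" using d by simp
  qed
qed

theorem lemma2p18:
  fixes rhorad :: "real \<Rightarrow> real"
    and eta0 nu sigma gamma :: real
    and ds :: "nat \<Rightarrow> real \<times> real" and d :: "real \<times> real"
    and phi :: "real^3 \<Rightarrow> real"
  assumes params: "eta0 > 0" "nu > 0" "0 < sigma" "sigma \<le> gamma" "gamma < 1"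
    and nonneg: "\<forall>r>0. rhorad r \<ge> 0"
    and H0_inf: "\<exists>c>0. \<forall>z::real^3. 0 < norm z \<and> norm z < eta0 \<longrightarrow> rhorad (norm z) \<ge> c"
    and H0_supp: "closure {z::real^3. z \<noteq> 0 \<and> rhorad (norm z) \<noteq> 0} = cball 0 1"
    and H0_int: "((\<lambda>z::real^3. rhorad (norm z)) has_integral 3) UNIV"
    and H1: "\<forall>s t. 0 < s \<and> s \<le> t \<longrightarrow> t powr (nu + 1) * rhorad t \<le> s powr (nu + 1) * rhorad s"
    and H2_smooth: "\<forall>k. \<forall>r>0. ((deriv ^^ k) (\<lambda>t. t * rhorad t)) differentiable (at r)"
    and H2_bound: "\<forall>k. \<exists>C. \<forall>r. 0 < r \<and> r < eta0 \<longrightarrow>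
                    \<bar>(deriv ^^ k) (\<lambda>t. t * rhorad t) r\<bar> \<le> C * (r * rhorad r) / r ^ k"
    and H3: "\<exists>C>0. \<forall>t1 t2. 0 < t1 \<and> t1 < t2 \<and> t2 < eta0 \<longrightarrow>
               t1 powr (2 + sigma) * rhorad t1 \<ge> C * (t2 powr (2 + sigma) * rhorad t2)"
    and H4: "\<exists>C>0. \<forall>t1 t2. 0 < t1 \<and> t1 < t2 \<and> t2 < eta0 \<longrightarrow>
               t1 powr (2 + gamma) * rhorad t1 \<le> C * (t2 powr (2 + gamma) * rhorad t2)"
    and ds_range: "\<forall>k. ds k \<in> {0..1} \<times> {0..1}"
    and d_range: "d \<in> {0..1} \<times> {0..1}"
    and ds_lim: "ds \<longlonglongrightarrow> d"
    and phi: "Cc_inf3 phi"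
  shows "uniform_limit UNIV (\<lambda>k. Qop rhorad (ds k) phi) (Qop rhorad d phi) sequentially
       \<and> uniform_limit UNIV (\<lambda>k. Dop rhorad (ds k) phi) (Dop rhorad d phi) sequentially"
proof -
  have z: "\<forall>t>1. rhorad t = 0" using rho_zero[OF H0_supp] by blast
  have c: "continuous_on {0<..} rhorad" by (rule rho_cont[OF H2_smooth])
  have a: "2 + gamma > 0" "2 + gamma < 3" using params by auto
  have rb: "\<exists>B\<ge>0. \<forall>t. 0 < t \<and> t \<le> 2 \<longrightarrow> rhorad t / t \<le> B * t powr (- (2 + gamma) - 1)"
    by (rule rho_bound[OF nonneg H1 H4 params(1) a(1) params(2) z])
  note QP = Qrad_props[OF z c nonneg a(1) rb]
  have Km: "(\<lambda>z::real^3. Qrad rhorad (norm z)) \<in> borel_measurable lborel"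
    by (rule K_meas) (rule QP(2))
  have Kint: "integrable lborel (\<lambda>z::real^3. Qrad rhorad (norm z))"
    by (rule K_integrable[OF Km QP(3) QP(1) _ a]) (use Qrad_zero[OF z] in auto)
  have Kzero: "\<forall>z::real^3. 1 < norm z \<longrightarrow> Qrad rhorad (norm z) = 0"
    using Qrad_zero[OF z] by auto
  obtain R where R: "\<forall>y. R < norm y \<longrightarrow> phi y = 0" "\<forall>i y. R < norm y \<longrightarrow> pderiv3 i phi y = 0"
    using phi_facts(1)[OF phi] by blast
  note pc = phi_facts(2)[OF phi] and Pc = phi_facts(3)[OF phi] and D = phi_facts(4)[OF phi]
  have part1: "uniform_limit UNIV (\<lambda>k. Qop rhorad (ds k) phi) (Qop rhorad d phi) sequentially"
    by (rule Q_unif[OF Kint Kzero pc R(1) ds_lim])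
  have Deq: "Dop rhorad d' phi x = (\<chi> i. Qop rhorad d' (pderiv3 i phi) x)" for d' x
  proof -
    have fd: "(\<lambda>h. \<Sum>i\<in>UNIV. h $ i * Qop rhorad d' (pderiv3 i phi) x) = frechet_derivative (Qop rhorad d' phi) (at x)"
      by (rule frechet_derivative_at[OF Qop_deriv[OF Kint pc R(1) Pc R(2) D]])
    show ?thesis
    proof -
      have ax: "(\<Sum>j\<in>UNIV. axis i 1 $ j * c j) = c i" for i :: 3 and c :: "3 \<Rightarrow> real"
        using exhaust_3[of i] by (auto simp: sum_3 axis_def)
      show ?thesis unfolding Dop_def grad3_def fd[symmetric] by (simp add: vec_eq_iff ax)
    qed
  qed
  have part2: "uniform_limit UNIV (\<lambda>k. Dop rhorad (ds k) phi) (Dop rhorad d phi) sequentially"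
    unfolding uniform_limit_iff
  proof (intro allI impI)
    fix e :: real assume e: "e > 0"
    have e3: "e / 3 > 0" using e by simp
    have "\<forall>\<^sub>F k in sequentially. \<forall>i. \<forall>x\<in>UNIV. dist (Qop rhorad (ds k) (pderiv3 i phi) x) (Qop rhorad d (pderiv3 i phi) x) < e / 3"
    proof (rule eventually_all_finite)
      fix i :: 3
      have "uniform_limit UNIV (\<lambda>k. Qop rhorad (ds k) (pderiv3 i phi)) (Qop rhorad d (pderiv3 i phi)) sequentially"
        by (rule Q_unif[OF Kint Kzero spec[OF Pc, of i] spec[OF R(2), of i] ds_lim])
      then show "\<forall>\<^sub>F k in sequentially. \<forall>x\<in>UNIV. dist (Qop rhorad (ds k) (pderiv3 i phi) x) (Qop rhorad d (pderiv3 i phi) x) < e / 3"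
        unfolding uniform_limit_iff using e3 by blast
    qed
    then show "\<forall>\<^sub>F k in sequentially. \<forall>x\<in>UNIV. dist (Dop rhorad (ds k) phi x) (Dop rhorad d phi x) < e"
    proof (rule eventually_mono)
      fix k assume k: "\<forall>i. \<forall>x\<in>UNIV. dist (Qop rhorad (ds k) (pderiv3 i phi) x) (Qop rhorad d (pderiv3 i phi) x) < e / 3"
      show "\<forall>x\<in>UNIV. dist (Dop rhorad (ds k) phi x) (Dop rhorad d phi x) < e"
      proof
        fix x :: "real^3"
        let ?v = "Dop rhorad (ds k) phi x - Dop rhorad d phi x"
        have "dist (Dop rhorad (ds k) phi x) (Dop rhorad d phi x) = norm ?v" by (simp add: dist_norm)
        also have "\<dots> \<le> (\<Sum>i\<in>UNIV. \<bar>?v $ i\<bar>)" by (rule norm_le_l1_cart)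
        also have "\<dots> < (\<Sum>i\<in>(UNIV::3 set). e / 3)"
        proof (rule sum_strict_mono)
          fix i :: 3
          have "\<bar>?v $ i\<bar> = dist (Qop rhorad (ds k) (pderiv3 i phi) x) (Qop rhorad d (pderiv3 i phi) x)"
            by (simp add: Deq dist_real_def)
          then show "\<bar>?v $ i\<bar> < e / 3" using k by simp
        qed auto
        also have "\<dots> = e" by simp
        finally show "dist (Dop rhorad (ds k) phi x) (Dop rhorad d phi x) < e" .
      qed
    qed
  qed
  show ?thesis using part1 part2 by blast
qed

end
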